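(* Let $t$ and $i$ be integers with $t \geq 1$ and $0 \leq i < t$, and suppose there exists a Hadamard matrix of order $4t+4i$. Then there exists a binary code (not necessarily linear) $C \subseteq \{0,1\}^{4t}$ of length $4t$ with exactly $8t+8i$ codewords and minimum distance at least $2t-2i$, i.e. any two distinct codewords of $C$ are at Hamming distance at least $2t-2i$.
   Context: A Hadamard matrix of order $n$ is an $n \times n$ matrix $H$ with entries in $\{\pm 1\}$ satisfying $HH^{\top} = nI_n$. A binary code of length $m$ is a subset of $\{0,1\}^m$; its minimum distance is the minimum Hamming distance between two distinct codewords. *)

theory Defs
  imports Main
begin

definition hadamard :: "nat \<Rightarrow> (nat \<Rightarrow> nat \<Rightarrow> int) \<Rightarrow> bool" where
  "hadamard n H \<longleftrightarrow>
     (\<forall>i<n. \<forall>j<n. H i j = 1 \<or> H i j = -1) \<and>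
     (\<forall>i<n. \<forall>k<n. (\<Sum>j<n. H i j * H k j) = (if i = k then int n else 0))"

definition hadamard_exists :: "nat \<Rightarrow> bool" where
  "hadamard_exists n \<longleftrightarrow> (\<exists>H. hadamard n H)"

definition hamming_dist :: "bool list \<Rightarrow> bool list \<Rightarrow> nat" where
  "hamming_dist x y = card {k. k < length x \<and> x ! k \<noteq> y ! k}"

definition binary_code :: "nat \<Rightarrow> bool list set \<Rightarrow> bool" where
  "binary_code m C \<longleftrightarrow> (\<forall>c\<in>C. length c = m)"

end

theory Submission
  imports Defs
begin

lemma had_count:
  assumes h: "hadamard N H" and r: "r < N" and k: "k < N" and rk: "r \<noteq> k"
  shows "card {j. j<N \<and> H r j = H k j} * 2 = N \<and> card {j. j<N \<and> H r j \<noteq> H k j} * 2 = N"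
proof -
  define A where "A = {j. j<N \<and> H r j = H k j}"
  define D where "D = {j. j<N \<and> H r j \<noteq> H k j}"
  have pm: "\<And>j. j < N \<Longrightarrow> H r j = 1 \<or> H r j = -1" "\<And>j. j < N \<Longrightarrow> H k j = 1 \<or> H k j = -1"
    using h r k unfolding hadamard_def by auto
  have fA: "finite A" and fD: "finite D" unfolding A_def D_def by auto
  have U: "{..<N} = A \<union> D" and dj: "A \<inter> D = {}" unfolding A_def D_def by auto
  have cN: "card A + card D = N"
    using card_Un_disjoint[OF fA fD dj] U by (metis card_lessThan)
  have "(\<Sum>j<N. H r j * H k j) = 0" using h r k rk unfolding hadamard_def by auto
  moreover have "(\<Sum>j<N. H r j * H k j) = (\<Sum>j\<in>A. H r j * H k j) + (\<Sum>j\<in>D. H r j * H k j)"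
    using U sum.union_disjoint[OF fA fD dj] by simp
  moreover have "(\<Sum>j\<in>A. H r j * H k j) = (\<Sum>j\<in>A. 1)"
  proof (rule sum.cong)
    fix x assume "x \<in> A"
    then have "x < N" "H r x = H k x" unfolding A_def by auto
    then show "H r x * H k x = 1" using pm(1)[of x] by auto
  qed simp
  moreover have "(\<Sum>j\<in>D. H r j * H k j) = (\<Sum>j\<in>D. -1)"
  proof (rule sum.cong)
    fix x assume "x \<in> D"
    then have "x < N" "H r x \<noteq> H k x" unfolding D_def by auto
    then show "H r x * H k x = -1" using pm(1)[of x] pm(2)[of x] by auto
  qed simp
  ultimately have "int (card A) - int (card D) = 0" by simp
  with cN show ?thesis unfolding A_def[symmetric] D_def[symmetric] by linarith
qed

theorem theorem2:
  fixes t i :: nat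
  assumes "t \<ge> 1" and "i < t"
    and "hadamard_exists (4*t + 4*i)"
  shows "\<exists>C. binary_code (4*t) C \<and> finite C \<and> card C = 8*t + 8*i \<and>
           (\<forall>x\<in>C. \<forall>y\<in>C. x \<noteq> y \<longrightarrow> hamming_dist x y \<ge> 2*t - 2*i)"
proof -
  define N where "N = 4*t + 4*i"
  obtain H where h: "hadamard N H" using assms(3) unfolding hadamard_exists_def N_def by blast
  have pm: "\<And>r j. r < N \<Longrightarrow> j < N \<Longrightarrow> H r j = 1 \<or> H r j = -1"
    using h unfolding hadamard_def by auto
  define w where "w = (\<lambda>(r::nat,b::bool). map (\<lambda>j. (H r j = 1) = b) [0..<4*t])"
  define I where "I = {..<N} \<times> (UNIV :: bool set)"
  have dist: "hamming_dist (w p) (w q) \<ge> 2*t - 2*i" if p: "p \<in> I" and q: "q \<in> I" and pq: "p \<noteq> q" for p q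
  proof -
    obtain r b where pe: "p = (r,b)" by (cases p)
    obtain k c where qe: "q = (k,c)" by (cases q)
    have r: "r < N" and k: "k < N" using p q pe qe I_def by auto
    define S where "S = {j. j<N \<and> (H r j = H k j) = (b \<noteq> c)}"
    have cS: "card S * 2 \<ge> N"
    proof (cases "r = k")
      case True
      then have "b \<noteq> c" using pq pe qe by auto
      then have "S = {..<N}" using True S_def by auto
      then show ?thesis by simp
    next
      case False
      note cc = had_count[OF h r k False]
      show ?thesis
      proof (cases "b = c")
        case True
        then have "S = {j. j<N \<and> H r j \<noteq> H k j}" using S_def by auto
        then show ?thesis using cc by simp
      next
        case False
        then have "S = {j. j<N \<and> H r j = H k j}" using S_def by auto
        then show ?thesis using cc by simp
      qed
    qed
    define T where "T = {j. j < 4*t \<and> w p ! j \<noteq> w q ! j}"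
    have hd: "hamming_dist (w p) (w q) = card T" unfolding hamming_dist_def T_def
      by (simp add: w_def pe)
    have "T = {j. j < 4*t \<and> (H r j = H k j) = (b \<noteq> c)}"
    proof -
      have "\<And>j. j < 4*t \<Longrightarrow> (w p ! j \<noteq> w q ! j) = ((H r j = H k j) = (b \<noteq> c))"
      proof -
        fix j assume j: "j < 4*t"
        then have jN: "j < N" using N_def by simp
        have "w p ! j = ((H r j = 1) = b)" "w q ! j = ((H k j = 1) = c)"
          using j by (simp_all add: w_def pe qe)
        then show "(w p ! j \<noteq> w q ! j) = ((H r j = H k j) = (b \<noteq> c))"
          using pm[OF r jN] pm[OF k jN] by auto
      qed
      then show ?thesis unfolding T_def by auto
    qed
    then have sub: "S \<subseteq> T \<union> {4*t..<N}" unfolding S_def by auto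
    have fT: "finite (T \<union> {4*t..<N})" unfolding T_def by auto
    have "card S \<le> card (T \<union> {4*t..<N})" by (rule card_mono[OF fT sub])
    also have "\<dots> \<le> card T + card {4*t..<N}" by (rule card_Un_le)
    finally have "card S \<le> card T + 4*i" by (simp add: N_def)
    with cS hd show ?thesis unfolding N_def by linarith
  qed
  have pos: "2*t - 2*i > 0" using assms(2) by simp
  have inj: "inj_on w I"
  proof (rule inj_onI)
    fix p q assume "p \<in> I" "q \<in> I" "w p = w q"
    then show "p = q" using dist[of p q] pos unfolding hamming_dist_def by fastforce
  qed
  have fI: "finite I" unfolding I_def by simp
  have cI: "card I = 8*t + 8*i" unfolding I_def N_def by (simp add: card_cartesian_product)
  show ?thesis
  proof (intro exI conjI)
    show "binary_code (4*t) (w ` I)" unfolding binary_code_def w_def by auto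
    show "finite (w ` I)" using fI by simp
    show "card (w ` I) = 8*t + 8*i" using card_image[OF inj] cI by simp
    show "\<forall>x\<in>w ` I. \<forall>y\<in>w ` I. x \<noteq> y \<longrightarrow> 2 * t - 2 * i \<le> hamming_dist x y"
      using dist by fastforce
  qed
qed

end
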